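(* Let $\alpha>0$, $A\ge0$, $B>0$, $t>0$, and let $P_n(x,t)$ be the monic polynomials orthogonal on $[0,\infty)$ w.r.t. $w(x,t)=x^\alpha e^{-x}(A+B\theta(x-t))$, with norms $h_n(t)$ and recurrence $zP_n=P_{n+1}+\alpha_n(t)P_n+\beta_n(t)P_{n-1}$. Let $R_n(t)=Bt^\alpha e^{-t}\{P_n(t,t)\}^2/h_n(t)$, $r_n(t)=Bt^\alpha e^{-t}P_n(t,t)P_{n-1}(t,t)/h_{n-1}(t)$ for $n\ge1$, and $r_0:=0$. Then for $n\ge0$ $$\alpha_n=2n+1+\alpha+tR_n,\qquad r_{n+1}+r_n=R_n(t-\alpha_n).$$
   Context: $\theta$ is the Heaviside function ($1$ for $x>0$, $0$ otherwise); $P_n(t,t)$ is $P_n(x,t)$ at $x=t$; $P_{-1}:=0$. *)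

theory Defs
  imports "HOL-Analysis.Analysis" "HOL-Computational_Algebra.Polynomial"
begin

definition heaviside :: "real \<Rightarrow> real" where
  "heaviside x = (if x > 0 then 1 else 0)"

definition jump_weight :: "real \<Rightarrow> real \<Rightarrow> real \<Rightarrow> real \<Rightarrow> real \<Rightarrow> real" where
  "jump_weight \<alpha> A B t x = x powr \<alpha> * exp (- x) * (A + B * heaviside (x - t))"

definition monic_orthogonal :: "(real \<Rightarrow> real) \<Rightarrow> (nat \<Rightarrow> real poly) \<Rightarrow> bool" where
  "monic_orthogonal w P \<longleftrightarrow>
     (\<forall>n. degree (P n) = n \<and> lead_coeff (P n) = 1 \<and>
        (\<forall>k<n. ((\<lambda>x. poly (P n) x * x ^ k * w x) has_integral 0) {0..}))"

definition op_norm :: "(real \<Rightarrow> real) \<Rightarrow> (nat \<Rightarrow> real poly) \<Rightarrow> nat \<Rightarrow> real" where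
  "op_norm w P n = integral {0..} (\<lambda>x. (poly (P n) x)^2 * w x)"

definition prev_poly :: "(nat \<Rightarrow> real poly) \<Rightarrow> nat \<Rightarrow> real poly" where
  "prev_poly P n = (if n = 0 then 0 else P (n - 1))"

definition R_aux :: "real \<Rightarrow> real \<Rightarrow> real \<Rightarrow> real \<Rightarrow> (nat \<Rightarrow> real poly) \<Rightarrow> nat \<Rightarrow> real" where
  "R_aux \<alpha> A B t P n =
     B * t powr \<alpha> * exp (- t) * (poly (P n) t)^2 / op_norm (jump_weight \<alpha> A B t) P n"

definition r_aux :: "real \<Rightarrow> real \<Rightarrow> real \<Rightarrow> real \<Rightarrow> (nat \<Rightarrow> real poly) \<Rightarrow> nat \<Rightarrow> real" where
  "r_aux \<alpha> A B t P n = (if n = 0 then 0 else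
     B * t powr \<alpha> * exp (- t) * poly (P n) t * poly (P (n - 1)) t
       / op_norm (jump_weight \<alpha> A B t) P (n - 1))"

end

theory Submission
  imports Defs "HOL-Real_Asymp.Real_Asymp"
begin

definition Wf :: "real \<Rightarrow> real \<Rightarrow> real" where "Wf a x = x powr a * exp (- x)"

lemma Wf_nonneg: "0 \<le> Wf a x" by (simp add: Wf_def)
lemma Wf_pos: "x > 0 \<Longrightarrow> 0 < Wf a x" by (simp add: Wf_def)

lemma mono_integrable:
  assumes "a > 0" "c \<ge> 0"
  shows "(\<lambda>x. x ^ k * Wf a x) integrable_on {c..}"
proof -
  have G: "((\<lambda>x. x powr (a + real k + 1 - 1) / exp x) has_integral Gamma (a + real k + 1)) {0..}"
    using Gamma_integral_real[of "a + real k + 1"] assms by simp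
  have eq: "x powr (a + real k + 1 - 1) / exp x = x ^ k * Wf a x" if "x \<in> {0..}" for x
  proof (cases "x = 0")
    case True thus ?thesis using assms by (simp add: Wf_def)
  next
    case False
    hence "x > 0" using that by auto
    thus ?thesis by (simp add: Wf_def powr_add powr_realpow exp_minus field_simps)
  qed
  have "((\<lambda>x. x ^ k * Wf a x) has_integral Gamma (a + real k + 1)) {0..}"
    using has_integral_eq[OF eq G] by simp
  hence "(\<lambda>x. x ^ k * Wf a x) absolutely_integrable_on {0..}"
    by (intro nonnegative_absolutely_integrable_1) (auto simp: Wf_nonneg)
  hence "(\<lambda>x. x ^ k * Wf a x) absolutely_integrable_on {c..}"
    by (rule set_integrable_subset) (use assms in auto)
  thus ?thesis by (simp add: absolutely_integrable_on_def)
qed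

lemma poly_integrable:
  assumes "a > 0" "c \<ge> 0"
  shows "(\<lambda>x. poly q x * Wf a x) integrable_on {c..}"
proof -
  have "(\<lambda>x. \<Sum>i\<le>degree q. coeff q i * (x ^ i * Wf a x)) integrable_on {c..}"
    by (rule integrable_sum) (simp_all add: integrable_on_mult_right mono_integrable assms)
  thus ?thesis by (simp add: poly_altdef sum_distrib_right mult.assoc)
qed

lemma tail_lim:
  fixes f :: "real \<Rightarrow> real"
  assumes y: "(f has_integral y) {c..}" and G: "\<And>b. b \<ge> c \<Longrightarrow> (f has_integral G b) {c..b}"
  shows "(G \<longlongrightarrow> y) at_top"
proof (rule tendstoI)
  fix e :: real assume e: "e > 0"
  have nb: "\<nexists>a b. {c..} = cbox a b"
  proof
    assume "\<exists>a b. {c..} = cbox a b"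
    then obtain a b where ab: "{c..} = {a..b::real}" by auto
    have "max c b + 1 \<in> {c..}" by simp
    hence "max c b + 1 \<in> {a..b}" using ab by simp
    thus False by (simp add: max_def split: if_splits)
  qed
  obtain B where B: "B > 0" and HB: "\<And>a b. ball 0 B \<subseteq> cbox a b \<Longrightarrow>
      (\<exists>z. ((\<lambda>x. if x \<in> {c..} then f x else 0) has_integral z) (cbox a b) \<and> norm (z - y) < e)"
    using has_integral_altD[OF y nb e] by blast
  show "\<forall>\<^sub>F x in at_top. dist (G x) y < e"
    unfolding eventually_at_top_linorder
  proof (intro exI allI impI)
    fix x assume x: "x \<ge> max B \<bar>c\<bar>"
    have "ball 0 B \<subseteq> cbox (-x) x"
    proof
      fix u assume "u \<in> ball (0::real) B"
      hence "\<bar>u\<bar> < B" by (simp add: dist_real_def)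
      thus "u \<in> cbox (-x) x" using x by (simp add: abs_less_iff)
    qed
    from HB[OF this] obtain z where z: "((\<lambda>u. if u \<in> {c..} then f u else 0) has_integral z) {-x..x}"
      and nz: "norm (z - y) < e" by auto
    have sub: "{c..x} \<subseteq> {-x..x}" using x by (auto simp: abs_le_iff)
    have "c \<le> x" using x by (simp add: abs_le_iff)
    hence "(f has_integral G x) {c..x}" by (rule G)
    hence h1: "((\<lambda>u. if u \<in> {c..x} then f u else 0) has_integral G x) {-x..x}"
      unfolding has_integral_restrict[OF sub] .
    have h2: "((\<lambda>u. if u \<in> {c..} then f u else 0) has_integral G x) {-x..x}"
      by (rule has_integral_eq[OF _ h1]) simp
    have "z = G x" by (rule has_integral_unique[OF z h2])
    thus "dist (G x) y < e" using nz by (simp add: dist_norm)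
  qed
qed

lemma F_lim:
  "((\<lambda>x::real. x powr (a+1) * exp (-x) * poly q x) \<longlongrightarrow> 0) at_top"
proof -
  have "((\<lambda>x. \<Sum>i\<le>degree q. coeff q i * (x powr (a+1) * exp (-x) * x ^ i)) \<longlongrightarrow> 0) at_top"
  proof (rule tendsto_null_sum)
    fix i
    have "((\<lambda>x::real. x powr (a+1) * exp (-x) * x ^ i) \<longlongrightarrow> 0) at_top" by real_asymp
    from tendsto_mult[OF tendsto_const this, of "coeff q i"]
    show "((\<lambda>x. coeff q i * (x powr (a+1) * exp (-x) * x ^ i)) \<longlongrightarrow> 0) at_top" by simp
  qed
  thus ?thesis by (simp add: poly_altdef sum_distrib_left mult_ac)
qed

lemma ibp:
  assumes "a > 0" "c \<ge> 0"
  shows "integral {c..} (\<lambda>x. poly (smult (a+1) q - pCons 0 q + pCons 0 (pderiv q)) x * Wf a x)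
         = - (c powr (a+1) * exp (-c) * poly q c)"
proof -
  define Q where "Q = smult (a+1) q - pCons 0 q + pCons 0 (pderiv q)"
  define F where "F x = x powr (a+1) * exp(-x) * poly q x" for x
  define f where "f x = poly Q x * Wf a x" for x
  have D: "(F has_vector_derivative f x) (at x)" if "x > 0" for x
  proof -
    have d1: "((\<lambda>x. x powr (a+1)) has_real_derivative (a+1) * x powr (a+1-1)) (at x)"
      using that by (rule has_real_derivative_powr)
    have d2: "((\<lambda>x::real. exp(-x)) has_real_derivative - exp(-x)) (at x)"
      by (auto intro!: derivative_eq_intros)
    have "(F has_real_derivative ((a+1) * x powr (a+1-1) * exp(-x) * poly q x
          + x powr (a+1) * (- exp(-x)) * poly q x + x powr (a+1) * exp(-x) * poly (pderiv q) x)) (at x)"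
      unfolding F_def using DERIV_mult[OF DERIV_mult[OF d1 d2] poly_DERIV[of q x]]
      by (simp add: algebra_simps)
    moreover have "(a+1) * x powr (a+1-1) * exp(-x) * poly q x
          + x powr (a+1) * (- exp(-x)) * poly q x + x powr (a+1) * exp(-x) * poly (pderiv q) x = f x"
      using that by (simp add: f_def Q_def Wf_def powr_add algebra_simps)
    ultimately show ?thesis by (simp add: has_real_derivative_iff_has_vector_derivative)
  qed
  have C: "continuous_on {c..b} F" for b
  proof -
    have p: "continuous_on {c..b} (\<lambda>x::real. x powr (a+1))"
      by (rule continuous_on_powr'[OF continuous_on_id continuous_on_const]) (use assms in auto)
    have e: "continuous_on {c..b} (\<lambda>x::real. exp (-x))" by (intro continuous_intros)
    have q: "continuous_on {c..b} (\<lambda>x::real. poly q x)" by (intro continuous_intros)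
    show ?thesis unfolding F_def by (intro continuous_on_mult p e q)
  qed
  have FTC: "(f has_integral F b - F c) {c..b}" if "b \<ge> c" for b
    using that assms by (intro fundamental_theorem_of_calculus_interior C D) auto
  have I: "(f has_integral integral {c..} f) {c..}"
    unfolding f_def using poly_integrable[OF assms] by auto
  have L1: "((\<lambda>b. F b - F c) \<longlongrightarrow> integral {c..} f) at_top"
    by (rule tail_lim[OF I FTC])
  have L2: "((\<lambda>b. F b - F c) \<longlongrightarrow> 0 - F c) at_top"
    unfolding F_def by (intro tendsto_diff F_lim tendsto_const)
  have "integral {c..} f = - F c" using tendsto_unique[OF _ L1 L2] by simp
  thus ?thesis unfolding f_def Q_def F_def .
qed

lemma sq_int_nonneg:
  assumes "a > 0" "c \<ge> 0"
  shows "0 \<le> integral {c..} (\<lambda>x. poly (q*q) x * Wf a x)"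
  by (rule integral_nonneg[OF poly_integrable[OF assms]]) (auto simp: Wf_nonneg)

lemma sq_int_pos:
  assumes "a > 0" "c \<ge> 0" "q \<noteq> 0"
  shows "0 < integral {c..} (\<lambda>x. poly (q*q) x * Wf a x)"
proof -
  define g where "g x = poly (q*q) x * Wf a x" for x
  have "\<not> {c<..} \<subseteq> {x. poly q x = 0}"
  proof
    assume "{c<..} \<subseteq> {x. poly q x = 0}"
    moreover have "finite {x. poly q x = 0}" by (rule poly_roots_finite[OF assms(3)])
    ultimately have "finite {c<..}" by (rule finite_subset)
    thus False using infinite_Ioi by blast
  qed
  then obtain x0 where x0: "x0 > c" "poly q x0 \<noteq> 0" by auto
  have gpos: "g x0 > 0" unfolding g_def using x0 assms
    by (intro mult_pos_pos Wf_pos) (auto simp: poly_mult not_square_less_zero zero_less_mult_iff)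
  have gnn: "0 \<le> g x" for x unfolding g_def by (auto simp: Wf_nonneg)
  have cont: "continuous_on {x0..x0+1} g"
    unfolding g_def Wf_def
  proof (intro continuous_on_mult continuous_on_powr'[OF continuous_on_id continuous_on_const])
    show "continuous_on {x0..x0 + 1} (poly (q * q))" by (intro continuous_intros)
    show "continuous_on {x0..x0 + 1} (\<lambda>x::real. exp (- x))" by (intro continuous_intros)
  qed (use assms x0 in auto)
  have int1: "g integrable_on {x0..x0+1}" using cont by (rule integrable_continuous_interval)
  have I1: "0 < integral {x0..x0+1} g"
  proof (rule ccontr)
    assume "\<not> ?thesis"
    moreover have "0 \<le> integral {x0..x0+1} g" by (rule integral_nonneg[OF int1]) (auto simp: gnn)
    ultimately have "integral {x0..x0+1} g = 0" by auto
    hence "(g has_integral 0) (cbox x0 (x0+1))" using int1 by (metis cbox_interval integrable_integral)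
    hence "g x0 = 0"
      by (intro has_integral_0_cbox_imp_0[of x0 "x0+1" g]) (use cont gnn in auto)
    with gpos show False by simp
  qed
  also have "\<dots> \<le> integral {c..} g"
  proof (rule integral_subset_le)
    show "g integrable_on {c..}" unfolding g_def by (rule poly_integrable[OF assms(1,2)])
  qed (use x0 int1 gnn in auto)
  finally show ?thesis unfolding g_def .
qed


definition Ic :: "real \<Rightarrow> real \<Rightarrow> real poly \<Rightarrow> real" where
  "Ic a c q = integral {c..} (\<lambda>x. poly q x * Wf a x)"

definition Lf :: "real \<Rightarrow> real \<Rightarrow> real \<Rightarrow> real \<Rightarrow> real poly \<Rightarrow> real" where
  "Lf a A B t q = A * Ic a 0 q + B * Ic a t q"

lemma Ic_add:
  assumes "a > 0" "c \<ge> 0"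
  shows "Ic a c (p + q) = Ic a c p + Ic a c q"
proof -
  have "Ic a c (p + q) = integral {c..} (\<lambda>x. poly p x * Wf a x + poly q x * Wf a x)"
    unfolding Ic_def by (simp add: distrib_right)
  also have "\<dots> = Ic a c p + Ic a c q"
    unfolding Ic_def by (rule integral_add[OF poly_integrable[OF assms] poly_integrable[OF assms]])
  finally show ?thesis .
qed

lemma Ic_smult: "Ic a c (smult r q) = r * Ic a c q"
proof -
  have "Ic a c (smult r q) = integral {c..} (\<lambda>x. r * (poly q x * Wf a x))"
    unfolding Ic_def by (simp add: mult.assoc)
  also have "\<dots> = r * Ic a c q" unfolding Ic_def by (rule integral_mult_right)
  finally show ?thesis .
qed

lemma Ic_zero: "Ic a c 0 = 0" unfolding Ic_def by simp

lemma Lf_add: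
  assumes "a > 0" "t \<ge> 0"
  shows "Lf a A B t (p + q) = Lf a A B t p + Lf a A B t q"
  unfolding Lf_def using Ic_add[OF assms(1) order_refl] Ic_add[OF assms] by (simp add: algebra_simps)

lemma Lf_smult: "Lf a A B t (smult r q) = r * Lf a A B t q"
  unfolding Lf_def Ic_smult by (simp add: algebra_simps)

lemma Lf_zero: "Lf a A B t 0 = 0"
  unfolding Lf_def Ic_zero by simp

lemma Lf_diff:
  assumes "a > 0" "t \<ge> 0"
  shows "Lf a A B t (p - q) = Lf a A B t p - Lf a A B t q"
proof -
  have "Lf a A B t ((p - q) + q) = Lf a A B t (p - q) + Lf a A B t q" by (rule Lf_add[OF assms])
  thus ?thesis by simp
qed

lemma Lf_sum:
  assumes "a > 0" "t \<ge> 0" "finite S"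
  shows "Lf a A B t (\<Sum>i\<in>S. f i) = (\<Sum>i\<in>S. Lf a A B t (f i))"
  using assms(3) by (induct rule: finite_induct) (simp_all add: Lf_zero Lf_add[OF assms(1,2)])

lemma Lf_has:
  assumes "a > 0" "t \<ge> 0"
  shows "((\<lambda>x. poly q x * jump_weight a A B t x) has_integral Lf a A B t q) {0..}"
proof -
  define g where "g x = poly q x * Wf a x" for x
  have i0: "(g has_integral Ic a 0 q) {0..}"
    unfolding g_def Ic_def using poly_integrable[OF assms(1) order_refl] by auto
  have it: "(g has_integral Ic a t q) {t..}"
    unfolding g_def Ic_def using poly_integrable[OF assms] by auto
  have it2: "(g has_integral Ic a t q) {t<..}"
  proof -
    have "negligible {x \<in> {t..} - {t<..}. g x \<noteq> 0}"
      by (rule negligible_subset[of "{t}"]) auto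
    moreover have "negligible {x \<in> {t<..} - {t..}. g x \<noteq> 0}"
      by (rule negligible_subset[of "{}"]) auto
    ultimately show ?thesis using it has_integral_spike_set_eq by blast
  qed
  have sub: "{t<..} \<subseteq> {0..}" using assms by auto
  have it3: "((\<lambda>x. if x \<in> {t<..} then g x else 0) has_integral Ic a t q) {0..}"
    unfolding has_integral_restrict[OF sub] by (rule it2)
  have "((\<lambda>x. A * g x + B * (if x \<in> {t<..} then g x else 0)) has_integral
        A * Ic a 0 q + B * Ic a t q) {0..}"
    by (intro has_integral_add has_integral_mult_right i0 it3)
  moreover have "A * g x + B * (if x \<in> {t<..} then g x else 0) = poly q x * jump_weight a A B t x" for x
    unfolding g_def Wf_def jump_weight_def heaviside_def by (simp add: algebra_simps)
  ultimately show ?thesis unfolding Lf_def by simp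
qed

lemma orth_gen:
  assumes a: "a > 0" and t: "t \<ge> 0"
    and orth: "\<And>k. k < n \<Longrightarrow> Lf a A B t (p * monom 1 k) = 0"
    and cq: "\<And>k. k \<ge> n \<Longrightarrow> coeff q k = 0"
  shows "Lf a A B t (p * q) = 0"
proof -
  have "p * q = p * (\<Sum>i\<le>degree q. monom (coeff q i) i)" by (simp add: poly_as_sum_of_monoms)
  also have "\<dots> = (\<Sum>i\<le>degree q. smult (coeff q i) (p * monom 1 i))"
    unfolding sum_distrib_left
    by (intro sum.cong refl) (metis mult_smult_right smult_monom mult.right_neutral)
  finally have "Lf a A B t (p * q) = (\<Sum>i\<le>degree q. coeff q i * Lf a A B t (p * monom 1 i))"
    by (simp add: Lf_sum[OF a t] Lf_smult)
  also have "\<dots> = 0"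
  proof (rule sum.neutral, rule ballI)
    fix i assume "i \<in> {..degree q}"
    show "coeff q i * Lf a A B t (p * monom 1 i) = 0"
    proof (cases "i < n")
      case True thus ?thesis using orth by simp
    next
      case False thus ?thesis using cq by simp
    qed
  qed
  finally show ?thesis .
qed


lemma coeff_shift_diff:
  assumes "degree p = m" "lead_coeff p = 1" "degree r = Suc m" "lead_coeff r = 1" "k \<ge> Suc m"
  shows "coeff (pCons 0 p - r) k = 0"
proof -
  obtain j where j: "k = Suc j" "j \<ge> m" using assms(5) by (cases k) auto
  show ?thesis
  proof (cases "j = m")
    case True
    thus ?thesis using assms j by simp
  next
    case False
    hence "j > degree p" "k > degree r" using assms j by auto
    thus ?thesis using j by (simp add: coeff_eq_0)
  qed
qed

lemma coeff_deriv_diff: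
  assumes "degree p = n" "lead_coeff p = 1" "k \<ge> n"
  shows "coeff (pCons 0 (pderiv p) - smult (real n) p) k = 0"
proof (cases k)
  case 0
  thus ?thesis using assms by simp
next
  case (Suc j)
  show ?thesis
  proof (cases "k = n")
    case True
    have "coeff (pCons 0 (pderiv p)) (Suc j) = real (Suc j) * coeff p (Suc j)"
      by (simp add: coeff_pderiv)
    thus ?thesis using assms Suc True by simp
  next
    case False
    hence "k > degree p" using assms by auto
    thus ?thesis using Suc by (simp add: coeff_pderiv coeff_eq_0)
  qed
qed

lemma alg0:
  fixes K p0 p1 h t a0 :: real
  assumes "p1 = (t - a0) * p0" "h > 0"
  shows "K * p1 * p0 / h + 0 = K * p0^2 / h * (t - a0)"
  unfolding assms(1) using assms(2) by (simp add: power2_eq_square field_simps)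

lemma alg1:
  fixes K p q p1 h h' t a b :: real
  assumes "p1 = (t - a) * p - b * q" "b = h / h'" "h > 0" "h' > 0"
  shows "K * p1 * p / h + K * p * q / h' = K * p^2 / h * (t - a)"
  unfolding assms(1) assms(2) using assms(3,4) by (simp add: power2_eq_square field_simps)

theorem lemma6:
  fixes \<alpha> A B t :: real and P :: "nat \<Rightarrow> real poly" and a b :: "nat \<Rightarrow> real"
  assumes "\<alpha> > 0" and "A \<ge> 0" and "B > 0" and "t > 0"
    and "monic_orthogonal (jump_weight \<alpha> A B t) P"
    and "\<And>n. [:0, 1:] * P n = P (Suc n) + smult (a n) (P n) + smult (b n) (prev_poly P n)"
  shows "\<forall>n. a n = 2 * real n + 1 + \<alpha> + t * R_aux \<alpha> A B t P n
           \<and> r_aux \<alpha> A B t P (Suc n) + r_aux \<alpha> A B t P n = R_aux \<alpha> A B t P n * (t - a n)"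
proof (intro allI)
  fix n
  have a0: "\<alpha> > 0" using assms(1) .
  have t0: "t \<ge> 0" using assms(4) by simp
  define L where "L = Lf \<alpha> A B t"
  define h where "h m = op_norm (jump_weight \<alpha> A B t) P m" for m
  define X :: "real poly" where "X = [:0, 1:]"
  have degP: "\<And>m. degree (P m) = m" and lcP: "\<And>m. lead_coeff (P m) = 1"
    and orth0: "\<And>m k. k < m \<Longrightarrow> ((\<lambda>x. poly (P m) x * x ^ k * jump_weight \<alpha> A B t x) has_integral 0) {0..}"
    using assms(5) unfolding monic_orthogonal_def by blast+
  have Ladd: "\<And>p q. L (p + q) = L p + L q" unfolding L_def by (rule Lf_add[OF a0 t0])
  have Ldiff: "\<And>p q. L (p - q) = L p - L q" unfolding L_def by (rule Lf_diff[OF a0 t0])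
  have Lsmult: "\<And>r q. L (smult r q) = r * L q" unfolding L_def by (rule Lf_smult)
  have orth1: "L (P m * monom 1 k) = 0" if "k < m" for m k
  proof -
    have "((\<lambda>x. poly (P m * monom 1 k) x * jump_weight \<alpha> A B t x) has_integral L (P m * monom 1 k)) {0..}"
      unfolding L_def by (rule Lf_has[OF a0 t0])
    moreover have "(\<lambda>x. poly (P m * monom 1 k) x * jump_weight \<alpha> A B t x)
        = (\<lambda>x. poly (P m) x * x ^ k * jump_weight \<alpha> A B t x)"
      by (simp add: poly_monom)
    ultimately show ?thesis using orth0[OF that] has_integral_unique by metis
  qed
  have orth: "L (P m * q) = 0" if "\<And>k. k \<ge> m \<Longrightarrow> coeff q k = 0" for m q
    unfolding L_def
  proof (rule orth_gen[OF a0 t0, where n=m])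
    show "\<And>k. k < m \<Longrightarrow> Lf \<alpha> A B t (P m * monom 1 k) = 0" using orth1 unfolding L_def by blast
    show "\<And>k. m \<le> k \<Longrightarrow> coeff q k = 0" by (rule that)
  qed
  have hL: "h m = L (P m * P m)" for m
  proof -
    have "((\<lambda>x. poly (P m * P m) x * jump_weight \<alpha> A B t x) has_integral L (P m * P m)) {0..}"
      unfolding L_def by (rule Lf_has[OF a0 t0])
    moreover have "(\<lambda>x. poly (P m * P m) x * jump_weight \<alpha> A B t x)
        = (\<lambda>x. (poly (P m) x)^2 * jump_weight \<alpha> A B t x)"
      by (simp add: power2_eq_square)
    ultimately show ?thesis unfolding h_def op_norm_def by (metis integral_unique)
  qed
  have Pnz: "P m \<noteq> 0" for m using lcP[of m] by auto
  have hpos: "h m > 0" for m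
  proof -
    have "0 \<le> Ic \<alpha> 0 (P m * P m)" unfolding Ic_def by (rule sq_int_nonneg[OF a0 order_refl])
    moreover have "0 < Ic \<alpha> t (P m * P m)" unfolding Ic_def by (rule sq_int_pos[OF a0 t0 Pnz])
    ultimately show ?thesis unfolding hL L_def Lf_def using assms(2,3)
      by (simp add: add_nonneg_pos)
  qed
  have lowdeg: "L (P m * P j) = 0" if "j < m" for m j
    by (rule orth) (use that degP in \<open>simp add: coeff_eq_0\<close>)
  have rec: "X * P m = P (Suc m) + smult (a m) (P m) + smult (b m) (prev_poly P m)" for m
    unfolding X_def by (rule assms(6))
  have XP: "X * p = pCons 0 p" for p unfolding X_def by simp
  have E1: "L (P n * (X * P n)) = a n * h n"
  proof -
    have "P n * (X * P n) = P n * P (Suc n) + smult (a n) (P n * P n) + smult (b n) (P n * prev_poly P n)"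
      unfolding rec by (simp add: distrib_left)
    hence "L (P n * (X * P n)) = L (P n * P (Suc n)) + a n * L (P n * P n) + b n * L (P n * prev_poly P n)"
      by (simp add: Ladd Lsmult)
    moreover have "L (P n * P (Suc n)) = 0" using lowdeg[of n "Suc n"] by (simp add: mult.commute)
    moreover have "L (P n * prev_poly P n) = 0"
    proof (cases n)
      case 0 thus ?thesis by (simp add: prev_poly_def L_def Lf_zero)
    next
      case (Suc m) thus ?thesis using lowdeg[of m n] by (simp add: prev_poly_def)
    qed
    ultimately show ?thesis by (simp add: hL)
  qed
  have bval: "b (Suc m) = h (Suc m) / h m" for m
  proof -
    have E2: "L (P m * (X * P (Suc m))) = b (Suc m) * h m"
    proof -
      have "P m * (X * P (Suc m)) = P m * P (Suc (Suc m)) + smult (a (Suc m)) (P m * P (Suc m))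
           + smult (b (Suc m)) (P m * P m)"
        unfolding rec by (simp add: distrib_left prev_poly_def)
      hence "L (P m * (X * P (Suc m))) = L (P m * P (Suc (Suc m))) + a (Suc m) * L (P m * P (Suc m))
           + b (Suc m) * L (P m * P m)"
        by (simp add: Ladd Lsmult)
      moreover have "L (P m * P (Suc (Suc m))) = 0" using lowdeg[of m "Suc (Suc m)"] by (simp add: mult.commute)
      moreover have "L (P m * P (Suc m)) = 0" using lowdeg[of m "Suc m"] by (simp add: mult.commute)
      ultimately show ?thesis by (simp add: hL)
    qed
    have E3: "L (P m * (X * P (Suc m))) = h (Suc m)"
    proof -
      define D where "D = X * P m - P (Suc m)"
      have "P m * (X * P (Suc m)) = P (Suc m) * P (Suc m) + P (Suc m) * D"
        unfolding D_def by (simp add: algebra_simps)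
      moreover have "L (P (Suc m) * D) = 0"
      proof (rule orth)
        fix k assume "Suc m \<le> k"
        thus "coeff D k = 0" unfolding D_def XP
          by (rule coeff_shift_diff[OF degP lcP degP lcP])
      qed
      ultimately show ?thesis by (simp add: Ladd hL)
    qed
    from E2 E3 have "b (Suc m) * h m = h (Suc m)" by simp
    thus ?thesis using hpos[of m] by (simp add: field_simps)
  qed
  define Q where "Q = P n * P n"
  define Qd where "Qd = smult (\<alpha>+1) Q - pCons 0 Q + pCons 0 (pderiv Q)"
  have LQd1: "L Qd = - (B * (t powr (\<alpha>+1) * exp (-t) * poly Q t))"
  proof -
    have "Ic \<alpha> 0 Qd = - (0 powr (\<alpha>+1) * exp (-0) * poly Q 0)"
      unfolding Ic_def Qd_def by (rule ibp[OF a0 order_refl])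
    moreover have "Ic \<alpha> t Qd = - (t powr (\<alpha>+1) * exp (-t) * poly Q t)"
      unfolding Ic_def Qd_def by (rule ibp[OF a0 t0])
    ultimately show ?thesis unfolding L_def Lf_def by simp
  qed
  have LQd2: "L Qd = (\<alpha>+1) * h n - a n * h n + 2 * real n * h n"
  proof -
    define D2 where "D2 = pCons 0 (pderiv (P n)) - smult (real n) (P n)"
    have pQ: "pCons 0 Q = P n * (X * P n)" unfolding Q_def XP by simp
    have dQ: "pCons 0 (pderiv Q) = smult 2 (smult (real n) (P n * P n) + P n * D2)"
    proof -
      have two: "r + r = smult 2 r" for r :: "real poly"
        using smult_add_left[of 1 1 r] by simp
      have "pderiv Q = smult 2 (P n * pderiv (P n))"
        unfolding Q_def pderiv_mult two[symmetric] by simp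
      hence "pCons 0 (pderiv Q) = smult 2 (pCons 0 (P n * pderiv (P n)))" by simp
      also have "pCons 0 (P n * pderiv (P n)) = P n * pCons 0 (pderiv (P n))"
        by (simp add: mult_pCons_right)
      also have "pCons 0 (pderiv (P n)) = smult (real n) (P n) + D2" unfolding D2_def by simp
      finally show ?thesis by (simp add: distrib_left)
    qed
    have LD2: "L (P n * D2) = 0"
    proof (rule orth)
      fix k assume "n \<le> k"
      thus "coeff D2 k = 0" unfolding D2_def by (rule coeff_deriv_diff[OF degP lcP])
    qed
    have "L Qd = (\<alpha>+1) * L Q - L (pCons 0 Q) + L (pCons 0 (pderiv Q))"
      unfolding Qd_def by (simp add: Ladd Ldiff Lsmult)
    also have "\<dots> = (\<alpha>+1) * h n - a n * h n + 2 * (real n * h n)"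
      unfolding pQ dQ E1 by (simp add: Ladd Lsmult LD2 hL Q_def)
    finally show ?thesis by simp
  qed
  have hn: "op_norm (jump_weight \<alpha> A B t) P n = h n" unfolding h_def ..
  have powr1: "t powr (\<alpha>+1) = t * t powr \<alpha>" using assms(4) by (simp add: powr_add)
  have first: "a n = 2 * real n + 1 + \<alpha> + t * R_aux \<alpha> A B t P n"
  proof -
    from LQd1 LQd2 have "(\<alpha>+1) * h n - a n * h n + 2 * real n * h n
        = - (B * (t powr (\<alpha>+1) * exp (-t) * (poly (P n) t)^2))"
      by (simp add: Q_def power2_eq_square)
    thus ?thesis using hpos[of n] unfolding R_aux_def hn powr1
      by (simp add: field_simps)
  qed
  have recT: "t * poly (P n) t = poly (P (Suc n)) t + a n * poly (P n) t + b n * poly (prev_poly P n) t"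
    using arg_cong[OF rec[of n], of "\<lambda>p. poly p t"] by (simp add: X_def)
  have second: "r_aux \<alpha> A B t P (Suc n) + r_aux \<alpha> A B t P n = R_aux \<alpha> A B t P n * (t - a n)"
  proof (cases n)
    case 0
    have "poly (P (Suc 0)) t = (t - a 0) * poly (P 0) t"
      using recT 0 by (simp add: prev_poly_def algebra_simps)
    note e = alg0[OF this hpos[of 0], of "B * t powr \<alpha> * exp (- t)"]
    have "r_aux \<alpha> A B t P (Suc 0) = B * t powr \<alpha> * exp (- t) * poly (P (Suc 0)) t * poly (P 0) t / h 0"
      by (simp add: r_aux_def h_def)
    moreover have "R_aux \<alpha> A B t P 0 = B * t powr \<alpha> * exp (- t) * (poly (P 0) t)^2 / h 0"
      by (simp add: R_aux_def h_def)
    moreover have "r_aux \<alpha> A B t P 0 = 0" by (simp add: r_aux_def)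
    ultimately show ?thesis using 0 e by simp
  next
    case (Suc m)
    have "poly (P (Suc n)) t = (t - a n) * poly (P n) t - b n * poly (P m) t"
      using recT Suc by (simp add: prev_poly_def algebra_simps)
    moreover have "b n = h n / h m" using bval[of m] Suc by simp
    ultimately have e: "B * t powr \<alpha> * exp (- t) * poly (P (Suc n)) t * poly (P n) t / h n
        + B * t powr \<alpha> * exp (- t) * poly (P n) t * poly (P m) t / h m
        = B * t powr \<alpha> * exp (- t) * (poly (P n) t)^2 / h n * (t - a n)"
      by (rule alg1[OF _ _ hpos[of n] hpos[of m]])
    have "r_aux \<alpha> A B t P (Suc n) = B * t powr \<alpha> * exp (- t) * poly (P (Suc n)) t * poly (P n) t / h n"
      by (simp add: r_aux_def h_def)
    moreover have "r_aux \<alpha> A B t P n = B * t powr \<alpha> * exp (- t) * poly (P n) t * poly (P m) t / h m"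
      using Suc by (simp add: r_aux_def h_def)
    moreover have "R_aux \<alpha> A B t P n = B * t powr \<alpha> * exp (- t) * (poly (P n) t)^2 / h n"
      by (simp add: R_aux_def h_def)
    ultimately show ?thesis using e by simp
  qed
  show "a n = 2 * real n + 1 + \<alpha> + t * R_aux \<alpha> A B t P n
           \<and> r_aux \<alpha> A B t P (Suc n) + r_aux \<alpha> A B t P n = R_aux \<alpha> A B t P n * (t - a n)"
    using first second by blast
qed

end
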